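(* Let $M$ be a topological space, $\mathcal{B}(M)$ its Borel $\sigma$-algebra and $\mathfrak{C}$ a quasipoint of $\mathcal{B}(M)$. Then $\mathfrak{C}$ contains some quasipoint $\mathfrak{B}$ of the lattice $\mathcal{T}(M)$ of open subsets of $M$ if and only if $\partial U\notin\mathfrak{C}$ for all open $U\subseteq M$, where $\partial U=\overline{U}\cap\overline{M\setminus U}$.
   Context: $\mathcal{T}(M)$ has operations $U\wedge V=U\cap V$, $U\vee V=U\cup V$. A quasipoint in a lattice $\mathbb{L}$ with least element $0$ is a maximal (w.r.t. inclusion) subset $\mathfrak{B}\subseteq\mathbb{L}$ such that $\mathfrak{B}\neq\emptyset$, $0\notin\mathfrak{B}$, and for all $a,b\in\mathfrak{B}$ there is $c\in\mathfrak{B}$ with $c\le a\wedge b$. *)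

theory Defs
  imports "HOL-Analysis.Analysis"
begin

text \<open>A lattice of sets L (ordered by inclusion, meet = intersection, least element the
empty set).  A filter-base-like subset: nonempty, avoids the least element, downward directed.\<close>
definition pre_quasipoint :: "'a set set \<Rightarrow> 'a set set \<Rightarrow> bool" where
  "pre_quasipoint L B \<longleftrightarrow> B \<subseteq> L \<and> B \<noteq> {} \<and> {} \<notin> B \<and>
     (\<forall>a\<in>B. \<forall>b\<in>B. \<exists>c\<in>B. c \<subseteq> a \<inter> b)"

definition quasipoint :: "'a set set \<Rightarrow> 'a set set \<Rightarrow> bool" where
  "quasipoint L B \<longleftrightarrow> pre_quasipoint L B \<and>
     (\<forall>B'. pre_quasipoint L B' \<and> B \<subseteq> B' \<longrightarrow> B' = B)"

definition open_sets :: "'a topology \<Rightarrow> 'a set set" where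
  "open_sets X = {U. openin X U}"

definition borel_sets :: "'a topology \<Rightarrow> 'a set set" where
  "borel_sets X = sigma_sets (topspace X) {U. openin X U}"

definition top_boundary :: "'a topology \<Rightarrow> 'a set \<Rightarrow> 'a set" where
  "top_boundary X U = X closure_of U \<inter> X closure_of (topspace X - U)"

end

theory Submission
  imports Defs
begin

lemma borel_basic:
  fixes X :: "'a topology"
  shows "borel_sets X \<subseteq> Pow (topspace X)"
    and "topspace X \<in> borel_sets X"
    and "a \<in> borel_sets X \<Longrightarrow> topspace X - a \<in> borel_sets X"
    and "a \<in> borel_sets X \<Longrightarrow> b \<in> borel_sets X \<Longrightarrow> a \<inter> b \<in> borel_sets X"
    and "openin X U \<Longrightarrow> U \<in> borel_sets X"
    and "closedin X F \<Longrightarrow> F \<in> borel_sets X"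
proof -
  have P: "{U. openin X U} \<subseteq> Pow (topspace X)" using openin_subset by blast
  have SA: "sigma_algebra (topspace X) (borel_sets X)"
    unfolding borel_sets_def using sigma_algebra_sigma_sets[OF P] .
  show "borel_sets X \<subseteq> Pow (topspace X)"
    unfolding borel_sets_def using sigma_sets_into_sp[OF P] by blast
  show "topspace X \<in> borel_sets X" unfolding borel_sets_def by (rule sigma_sets_top)
  have CC: "\<And>a. a \<in> borel_sets X \<Longrightarrow> topspace X - a \<in> borel_sets X"
    unfolding borel_sets_def by (rule sigma_sets.Compl)
  show C: "a \<in> borel_sets X \<Longrightarrow> topspace X - a \<in> borel_sets X"
    unfolding borel_sets_def by (rule sigma_sets.Compl)
  show "a \<in> borel_sets X \<Longrightarrow> b \<in> borel_sets X \<Longrightarrow> a \<inter> b \<in> borel_sets X"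
  proof -
    interpret sigma_algebra "topspace X" "borel_sets X" by (rule SA)
    show "a \<in> borel_sets X \<Longrightarrow> b \<in> borel_sets X \<Longrightarrow> a \<inter> b \<in> borel_sets X" by (rule Int)
  qed
  show O: "openin X U \<Longrightarrow> U \<in> borel_sets X" for U
    unfolding borel_sets_def by (rule sigma_sets.Basic) simp
  show "closedin X F \<Longrightarrow> F \<in> borel_sets X"
  proof -
    assume "closedin X F"
    then have "openin X (topspace X - F)" and "F \<subseteq> topspace X"
      by (auto simp: closedin_def)
    have "topspace X - (topspace X - F) \<in> borel_sets X" by (rule CC[OF O[OF \<open>openin X (topspace X - F)\<close>]])
    then show ?thesis using \<open>F \<subseteq> topspace X\<close> by (simp add: double_diff)
  qed
qed

lemma boundary_open:
  assumes "openin X U"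
  shows "top_boundary X U = X closure_of U - U"
proof -
  have "X closure_of (topspace X - U) = topspace X - U"
    using assms by (simp add: closure_of_eq closedin_diff)
  then show ?thesis unfolding top_boundary_def
    using closure_of_subset_topspace[of X U] by blast
qed

lemma dir_aux:
  assumes "\<forall>a\<in>C. \<forall>b\<in>C. \<exists>c\<in>C. c \<subseteq> a \<inter> b"
    "a \<in> C \<union> (\<lambda>c. A \<inter> c) ` C" "b \<in> C \<union> (\<lambda>c. A \<inter> c) ` C"
  shows "\<exists>c\<in>C \<union> (\<lambda>c. A \<inter> c) ` C. c \<subseteq> a \<inter> b"
proof -
  from assms(2) obtain a0 where a0: "a0 \<in> C" "a = a0 \<or> a = A \<inter> a0" by blast
  from assms(3) obtain b0 where b0: "b0 \<in> C" "b = b0 \<or> b = A \<inter> b0" by blast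
  from assms(1) a0(1) b0(1) obtain c where c: "c \<in> C" "c \<subseteq> a0 \<inter> b0" by blast
  have "A \<inter> c \<subseteq> a \<inter> b \<or> c \<subseteq> a \<inter> b" using c(2) a0(2) b0(2) by blast
  moreover have "A \<inter> c \<in> C \<union> (\<lambda>c. A \<inter> c) ` C" using c(1) by blast
  moreover have "c \<in> C \<union> (\<lambda>c. A \<inter> c) ` C" using c(1) by blast
  ultimately show ?thesis by blast
qed

lemma qp_upclosed:
  assumes q: "quasipoint (borel_sets X) C" and A: "A \<in> C" "A \<subseteq> A'" "A' \<in> borel_sets X"
  shows "A' \<in> C"
proof -
  have pre: "pre_quasipoint (borel_sets X) C" and mx: "\<And>B'. pre_quasipoint (borel_sets X) B' \<Longrightarrow> C \<subseteq> B' \<Longrightarrow> B' = C"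
    using q unfolding quasipoint_def by auto
  have "pre_quasipoint (borel_sets X) (insert A' C)"
    unfolding pre_quasipoint_def
  proof (intro conjI ballI)
    show "insert A' C \<subseteq> borel_sets X" using pre A unfolding pre_quasipoint_def by blast
    show "insert A' C \<noteq> {}" by blast
    have "A \<noteq> {}" using pre A unfolding pre_quasipoint_def by blast
    then show "{} \<notin> insert A' C" using pre A unfolding pre_quasipoint_def by blast
    fix a b assume a: "a \<in> insert A' C" and b: "b \<in> insert A' C"
    have ex: "\<exists>x0\<in>C. x0 \<subseteq> x" if "x \<in> insert A' C" for x
      using that A(1,2) by auto
    obtain a0 where a0: "a0 \<in> C" "a0 \<subseteq> a" using ex[OF a] by blast
    obtain b0 where b0: "b0 \<in> C" "b0 \<subseteq> b" using ex[OF b] by blast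
    obtain c where c: "c \<in> C" "c \<subseteq> a0 \<inter> b0" using pre a0(1) b0(1) unfolding pre_quasipoint_def by blast
    have "c \<subseteq> a \<inter> b" using c(2) a0(2) b0(2) by blast
    moreover have "c \<in> insert A' C" using c(1) by simp
    ultimately show "\<exists>c\<in>insert A' C. c \<subseteq> a \<inter> b" by blast
  qed
  then have "insert A' C = C" using mx by blast
  then show ?thesis by blast
qed

lemma qp_Int:
  assumes q: "quasipoint (borel_sets X) C" and "a \<in> C" "b \<in> C"
  shows "a \<inter> b \<in> C"
proof -
  have pre: "pre_quasipoint (borel_sets X) C" using q unfolding quasipoint_def by auto
  then obtain c where "c \<in> C" "c \<subseteq> a \<inter> b" using assms unfolding pre_quasipoint_def by blast
  moreover have "a \<inter> b \<in> borel_sets X" using pre assms borel_basic(4) unfolding pre_quasipoint_def by blast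
  ultimately show ?thesis using qp_upclosed[OF q] by blast
qed

lemma qp_top:
  assumes q: "quasipoint (borel_sets X) C"
  shows "topspace X \<in> C"
proof -
  have pre: "pre_quasipoint (borel_sets X) C" using q unfolding quasipoint_def by auto
  then obtain c where "c \<in> C" using pre unfolding pre_quasipoint_def by blast
  moreover have "c \<subseteq> topspace X" using pre \<open>c \<in> C\<close> borel_basic(1) unfolding pre_quasipoint_def by blast
  ultimately show ?thesis using qp_upclosed[OF q] borel_basic(2) by blast
qed

lemma qp_ultra:
  assumes q: "quasipoint (borel_sets X) C" and A: "A \<in> borel_sets X"
  shows "A \<in> C \<or> topspace X - A \<in> C"
proof (cases "\<forall>c\<in>C. A \<inter> c \<noteq> {}")
  case True
  have pre: "pre_quasipoint (borel_sets X) C" and mx: "\<And>B'. pre_quasipoint (borel_sets X) B' \<Longrightarrow> C \<subseteq> B' \<Longrightarrow> B' = C"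
    using q unfolding quasipoint_def by auto
  let ?B = "C \<union> (\<lambda>c. A \<inter> c) ` C"
  have "pre_quasipoint (borel_sets X) ?B"
    unfolding pre_quasipoint_def
  proof (intro conjI ballI)
    show "?B \<subseteq> borel_sets X" using pre A borel_basic(4) unfolding pre_quasipoint_def by blast
    show "?B \<noteq> {}" using pre unfolding pre_quasipoint_def by blast
    show "{} \<notin> ?B" using pre True unfolding pre_quasipoint_def by auto
    fix a b assume a: "a \<in> ?B" and b: "b \<in> ?B"
    show "\<exists>c\<in>?B. c \<subseteq> a \<inter> b"
      by (rule dir_aux[OF _ a b]) (use pre in \<open>simp add: pre_quasipoint_def\<close>)
  qed
  then have "?B = C" using mx by blast
  moreover obtain c where "c \<in> C" using pre unfolding pre_quasipoint_def by blast
  ultimately have "A \<inter> c \<in> C" by blast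
  then show ?thesis using qp_upclosed[OF q _ _ A] by blast
next
  case False
  then obtain c where c: "c \<in> C" "A \<inter> c = {}" by blast
  have pre: "pre_quasipoint (borel_sets X) C" using q unfolding quasipoint_def by auto
  then have "c \<subseteq> topspace X" using c borel_basic(1) unfolding pre_quasipoint_def by blast
  then have "c \<subseteq> topspace X - A" using c by blast
  then show ?thesis using qp_upclosed[OF q c(1)] borel_basic(3)[OF A] by blast
qed

lemma qp_nonempty_int:
  assumes q: "quasipoint (borel_sets X) C" and "a \<in> C" "b \<in> C"
  shows "a \<inter> b \<noteq> {}"
  using qp_Int[OF assms] q unfolding quasipoint_def pre_quasipoint_def by auto

theorem proposition3p45:
  fixes X :: "'a topology" and C :: "'a set set"
  assumes "quasipoint (borel_sets X) C"
  shows "(\<exists>B. quasipoint (open_sets X) B \<and> B \<subseteq> C) \<longleftrightarrow>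
         (\<forall>U. openin X U \<longrightarrow> top_boundary X U \<notin> C)"
proof
  assume "\<exists>B. quasipoint (open_sets X) B \<and> B \<subseteq> C"
  then obtain B where qB: "quasipoint (open_sets X) B" and BC: "B \<subseteq> C" by blast
  have preB: "pre_quasipoint (open_sets X) B" and mxB: "\<And>B'. pre_quasipoint (open_sets X) B' \<Longrightarrow> B \<subseteq> B' \<Longrightarrow> B' = B"
    using qB unfolding quasipoint_def by auto
  show "\<forall>U. openin X U \<longrightarrow> top_boundary X U \<notin> C"
  proof (intro allI impI notI)
    fix U assume U: "openin X U" and bd: "top_boundary X U \<in> C"
    have bdU: "top_boundary X U = X closure_of U - U" using boundary_open[OF U] .
    show False
    proof (cases "\<forall>b\<in>B. U \<inter> b \<noteq> {}")
      case True
      let ?B = "B \<union> (\<lambda>b. U \<inter> b) ` B"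
      have "pre_quasipoint (open_sets X) ?B"
        unfolding pre_quasipoint_def
      proof (intro conjI ballI)
        have "B \<subseteq> open_sets X" using preB unfolding pre_quasipoint_def by simp
        then show "?B \<subseteq> open_sets X" using U unfolding open_sets_def by (auto intro: openin_Int)
        show "?B \<noteq> {}" using preB unfolding pre_quasipoint_def by blast
        show "{} \<notin> ?B" using preB True unfolding pre_quasipoint_def by auto
        fix a b assume a: "a \<in> ?B" and b: "b \<in> ?B"
        show "\<exists>c\<in>?B. c \<subseteq> a \<inter> b"
          by (rule dir_aux[OF _ a b]) (use preB in \<open>simp add: pre_quasipoint_def\<close>)
      qed
      then have "?B = B" using mxB by blast
      moreover obtain b where "b \<in> B" using preB unfolding pre_quasipoint_def by blast
      moreover have "U \<inter> b \<in> ?B" using \<open>b \<in> B\<close> by blast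
      ultimately have "U \<inter> b \<in> B" by simp
      then have "U \<inter> b \<in> C" using BC by blast
      moreover have "(U \<inter> b) \<inter> top_boundary X U = {}" unfolding bdU by blast
      ultimately show False using qp_nonempty_int[OF assms \<open>U \<inter> b \<in> C\<close> bd] by simp
    next
      case False
      then obtain b where b: "b \<in> B" "U \<inter> b = {}" by blast
      have "B \<subseteq> open_sets X" using preB unfolding pre_quasipoint_def by simp
      then have "openin X b" using b unfolding open_sets_def by blast
      then have "b \<inter> X closure_of U = {}" using openin_Int_closure_of_eq_empty[of X b U] b(2) by (simp add: Int_commute)
      then have "b \<inter> top_boundary X U = {}" unfolding bdU by blast
      moreover have "b \<in> C" using b BC by blast
      ultimately show False using qp_nonempty_int[OF assms \<open>b \<in> C\<close> bd] by simp
    qed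
  qed
next
  assume H: "\<forall>U. openin X U \<longrightarrow> top_boundary X U \<notin> C"
  have preC: "pre_quasipoint (borel_sets X) C" using assms unfolding quasipoint_def by auto
  let ?B = "C \<inter> open_sets X"
  have preB: "pre_quasipoint (open_sets X) ?B"
    unfolding pre_quasipoint_def
  proof (intro conjI ballI)
    show "?B \<subseteq> open_sets X" by simp
    show "?B \<noteq> {}" using qp_top[OF assms] unfolding open_sets_def by auto
    show "{} \<notin> ?B" using preC unfolding pre_quasipoint_def by auto
    fix a b assume "a \<in> ?B" "b \<in> ?B"
    then have "a \<inter> b \<in> ?B" using qp_Int[OF assms] unfolding open_sets_def by auto
    then show "\<exists>c\<in>?B. c \<subseteq> a \<inter> b" by (intro bexI[of _ "a \<inter> b"]) auto
  qed
  have "quasipoint (open_sets X) ?B"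
    unfolding quasipoint_def
  proof (intro conjI allI impI preB)
    fix B' assume "pre_quasipoint (open_sets X) B' \<and> ?B \<subseteq> B'"
    then have preB': "pre_quasipoint (open_sets X) B'" and sub: "?B \<subseteq> B'" by auto
    have "B' \<subseteq> ?B"
    proof
      fix W assume W: "W \<in> B'"
      have "B' \<subseteq> open_sets X" using preB' unfolding pre_quasipoint_def by simp
      then have Wo: "openin X W" using W unfolding open_sets_def by blast
      have "W \<in> C"
      proof (rule ccontr)
        assume "W \<notin> C"
        then have c1: "topspace X - W \<in> C" using qp_ultra[OF assms borel_basic(5)[OF Wo]] by blast
        have "closedin X (top_boundary X W)" unfolding top_boundary_def
          by (simp add: closedin_Int)
        then have bb: "top_boundary X W \<in> borel_sets X" by (rule borel_basic(6))
        have "top_boundary X W \<notin> C" using H Wo by blast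
        then have c2: "topspace X - top_boundary X W \<in> C" using qp_ultra[OF assms bb] by blast
        have sW: "W \<subseteq> X closure_of W" using closure_of_subset[OF openin_subset[OF Wo]] .
        have eq: "(topspace X - W) \<inter> (topspace X - top_boundary X W) = topspace X - X closure_of W"
          unfolding boundary_open[OF Wo] using sW by blast
        have "topspace X - X closure_of W \<in> C" using qp_Int[OF assms c1 c2] eq by simp
        moreover have "openin X (topspace X - X closure_of W)" by (simp add: openin_diff)
        ultimately have "topspace X - X closure_of W \<in> ?B" unfolding open_sets_def by simp
        then have V: "topspace X - X closure_of W \<in> B'" using sub by (rule subsetD[rotated])
        from sW have "W \<inter> (topspace X - X closure_of W) = {}" by blast
        moreover obtain c where "c \<in> B'" "c \<subseteq> W \<inter> (topspace X - X closure_of W)"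
          using preB' W V unfolding pre_quasipoint_def by meson
        moreover have "{} \<notin> B'" using preB' unfolding pre_quasipoint_def by simp
        ultimately show False by auto
      qed
      then show "W \<in> ?B" using Wo unfolding open_sets_def by simp
    qed
    then show "B' = ?B" using sub by blast
  qed
  then show "\<exists>B. quasipoint (open_sets X) B \<and> B \<subseteq> C" by (intro exI[of _ ?B]) simp
qed

end
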